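(* Let $m,\ell,\ell',t$ be positive integers with $m\ge t\ell+\ell'$, let $a>0$, and set $\varepsilon=\frac{2a+\sqrt{8\ln 2}}{\sqrt t}$. Let $\mathcal G\subset\binom{[m]}{\ell}$ and $\alpha:=|\mathcal G|/\binom{m}{\ell}$. Let $H$ be a uniformly random element of $\binom{[m]}{\ell'}$. Then $$\mathsf P\Big[\,|\mathcal G(\overline H)|<(\alpha-\varepsilon)\binom{m-\ell'}{\ell}\Big]<2e^{-a^2/2}.$$
   Context: $[m]=\{1,\dots,m\}$; $\binom{[m]}{\ell}$ is the family of all $\ell$-element subsets of $[m]$. For a family $\mathcal G$ and a set $H$, $\mathcal G(\overline H):=\{G\in\mathcal G: G\cap H=\varnothing\}$. $\ln$ is the natural logarithm. *)

theory Defs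
  imports "HOL-Probability.Probability"
begin

definition ksubsets :: "nat \<Rightarrow> nat \<Rightarrow> nat set set" where
  "ksubsets m l = {S. S \<subseteq> {1..m} \<and> card S = l}"

definition avoiding :: "'a set set \<Rightarrow> 'a set \<Rightarrow> 'a set set" where
  "avoiding G H = {F \<in> G. F \<inter> H = {}}"

definition unif_prob :: "'a set \<Rightarrow> ('a \<Rightarrow> bool) \<Rightarrow> real" where
  "unif_prob \<Omega> P = measure_pmf.prob (pmf_of_set \<Omega>) {H. P H}"

end

theory Submission
  imports Defs
begin

definition Ss :: "nat set \<Rightarrow> nat \<Rightarrow> nat set set" where
  "Ss R k = {K. K \<subseteq> R \<and> card K = k}"

lemma Ss_finite: "finite R \<Longrightarrow> finite (Ss R k)"
  unfolding Ss_def by (rule finite_subset[of _ "Pow R"]) auto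

lemma Ss_card: "finite R \<Longrightarrow> card (Ss R k) = card R choose k"
  unfolding Ss_def by (rule n_subsets)

lemma Ss_not: "{F \<in> Ss R l. h \<notin> F} = Ss (R - {h}) l"
  unfolding Ss_def by auto

lemma card_contains:
  assumes "finite R" "h \<in> R"
  shows "card {F \<in> Ss R l. h \<in> F} = (card R choose l) - ((card R - 1) choose l)"
proof -
  have "Ss R l = {F \<in> Ss R l. h \<in> F} \<union> {F \<in> Ss R l. h \<notin> F}" by auto
  hence "card (Ss R l) = card {F \<in> Ss R l. h \<in> F} + card {F \<in> Ss R l. h \<notin> F}"
    using Ss_finite[OF assms(1)] by (metis (no_types, lifting) card_Un_disjoint disjoint_iff finite_Un mem_Collect_eq)
  moreover have "card {F \<in> Ss R l. h \<notin> F} = (card R - 1) choose l"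
    using Ss_not Ss_card assms by (simp add: card_Diff_singleton)
  ultimately show ?thesis using Ss_card[OF assms(1)] by simp
qed

lemma card_contains_real:
  assumes "finite R" "h \<in> R"
  shows "real (card {F \<in> Ss R l. h \<in> F}) = real (card R choose l) - real ((card R - 1) choose l)"
proof -
  have "card {F \<in> Ss R l. h \<notin> F} \<le> card (Ss R l)"
    by (intro card_mono Ss_finite assms) auto
  hence "(card R - 1) choose l \<le> card R choose l"
    using Ss_not Ss_card assms by (simp add: card_Diff_singleton)
  thus ?thesis using card_contains[OF assms] by simp
qed

lemma card_pair:
  assumes "finite R" "h \<in> R" "h' \<in> R" "h \<noteq> h'"
  shows "real (card {F \<in> Ss R l. h \<in> F \<and> h' \<in> F}) =
     real (card {F \<in> Ss R l. h \<in> F}) - (real ((card R - 1) choose l) - real ((card R - 2) choose l))"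
proof -
  have eq: "{F \<in> Ss R l. h \<in> F} = {F \<in> Ss R l. h \<in> F \<and> h' \<in> F} \<union> {F \<in> Ss (R - {h'}) l. h \<in> F}"
    unfolding Ss_def by auto
  have fin: "finite {F \<in> Ss R l. h \<in> F \<and> h' \<in> F}" "finite {F \<in> Ss (R - {h'}) l. h \<in> F}"
    using Ss_finite assms(1) by auto
  have "card {F \<in> Ss R l. h \<in> F} = card {F \<in> Ss R l. h \<in> F \<and> h' \<in> F} + card {F \<in> Ss (R - {h'}) l. h \<in> F}"
    unfolding eq by (rule card_Un_disjoint[OF fin]) (auto simp: Ss_def)
  moreover have "real (card {F \<in> Ss (R - {h'}) l. h \<in> F}) = real ((card R - 1) choose l) - real ((card R - 2) choose l)"
  proof -
    have "card (R - {h'}) - 1 = card R - 2" using assms by (simp add: card_Diff_singleton)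
    thus ?thesis using card_contains_real[of "R - {h'}" h l] assms by (simp add: card_Diff_singleton)
  qed
  ultimately show ?thesis by simp
qed

lemma quad_sum:
  fixes g :: "nat \<Rightarrow> real"
  assumes R: "finite R" and g0: "(\<Sum>h\<in>R. g h) = 0"
  shows "(\<Sum>F\<in>Ss R l. (\<Sum>h\<in>F. g h)^2) =
     (real ((card R - 1) choose l) - real ((card R - 2) choose l)) * (\<Sum>h\<in>R. (g h)^2)"
proof -
  define q where "q = real ((card R - 1) choose l) - real ((card R - 2) choose l)"
  define p where "p = real (card R choose l) - real ((card R - 1) choose l)"
  have fS: "finite (Ss R l)" using Ss_finite R by auto
  have sub: "\<And>F. F \<in> Ss R l \<Longrightarrow> F \<subseteq> R" unfolding Ss_def by auto
  have "(\<Sum>F\<in>Ss R l. (\<Sum>h\<in>F. g h)^2) =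
      (\<Sum>F\<in>Ss R l. \<Sum>h\<in>R. \<Sum>h'\<in>R. (if h \<in> F \<and> h' \<in> F then g h * g h' else 0))"
  proof (rule sum.cong[OF refl])
    fix F assume F: "F \<in> Ss R l"
    have "(\<Sum>h\<in>F. g h)^2 = (\<Sum>h\<in>F. \<Sum>h'\<in>F. g h * g h')"
      by (simp add: power2_eq_square sum_product)
    also have "\<dots> = (\<Sum>h\<in>R. \<Sum>h'\<in>R. (if h \<in> F \<and> h' \<in> F then g h * g h' else 0))"
    proof -
      have "(\<Sum>h\<in>F. \<Sum>h'\<in>F. g h * g h') = (\<Sum>h\<in>R. if h \<in> F then \<Sum>h'\<in>F. g h * g h' else 0)"
        using sub[OF F] R by (simp add: sum.If_cases Int_absorb1)
      also have "\<dots> = (\<Sum>h\<in>R. \<Sum>h'\<in>R. (if h \<in> F \<and> h' \<in> F then g h * g h' else 0))"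
      proof (rule sum.cong[OF refl])
        fix h assume "h \<in> R"
        show "(if h \<in> F then \<Sum>h'\<in>F. g h * g h' else 0) = (\<Sum>h'\<in>R. (if h \<in> F \<and> h' \<in> F then g h * g h' else 0))"
          using sub[OF F] R by (simp add: sum.If_cases Int_absorb1)
      qed
      finally show ?thesis .
    qed
    finally show "(\<Sum>h\<in>F. g h)^2 = (\<Sum>h\<in>R. \<Sum>h'\<in>R. (if h \<in> F \<and> h' \<in> F then g h * g h' else 0))" .
  qed
  also have "\<dots> = (\<Sum>h\<in>R. \<Sum>h'\<in>R. \<Sum>F\<in>Ss R l. (if h \<in> F \<and> h' \<in> F then g h * g h' else 0))"
    by (subst sum.swap) (rule sum.cong[OF refl], rule sum.swap)
  also have "\<dots> = (\<Sum>h\<in>R. \<Sum>h'\<in>R. g h * g h' * real (card {F \<in> Ss R l. h \<in> F \<and> h' \<in> F}))"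
    by (simp add: sum.If_cases fS Int_def mult.commute)
  also have "\<dots> = (\<Sum>h\<in>R. q * (g h)^2)"
  proof (rule sum.cong[OF refl])
    fix h assume h: "h \<in> R"
    have "(\<Sum>h'\<in>R. g h * g h' * real (card {F \<in> Ss R l. h \<in> F \<and> h' \<in> F}))
       = g h * g h * p + (\<Sum>h'\<in>R - {h}. g h * g h' * (p - q))"
    proof -
      have "(\<Sum>h'\<in>R. g h * g h' * real (card {F \<in> Ss R l. h \<in> F \<and> h' \<in> F}))
         = g h * g h * real (card {F \<in> Ss R l. h \<in> F \<and> h \<in> F}) + (\<Sum>h'\<in>R - {h}. g h * g h' * real (card {F \<in> Ss R l. h \<in> F \<and> h' \<in> F}))"
        using h R by (simp add: sum.remove)
      also have "\<dots> = g h * g h * p + (\<Sum>h'\<in>R - {h}. g h * g h' * (p - q))"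
      proof -
        have "real (card {F \<in> Ss R l. h \<in> F \<and> h \<in> F}) = p"
          using card_contains_real[OF R h, of l] by (simp add: p_def)
        moreover have "(\<Sum>h'\<in>R - {h}. g h * g h' * real (card {F \<in> Ss R l. h \<in> F \<and> h' \<in> F})) = (\<Sum>h'\<in>R - {h}. g h * g h' * (p - q))"
        proof (rule sum.cong[OF refl])
          fix h' assume "h' \<in> R - {h}"
          thus "g h * g h' * real (card {F \<in> Ss R l. h \<in> F \<and> h' \<in> F}) = g h * g h' * (p - q)"
            using card_pair[OF R h, of h' l] card_contains_real[OF R h, of l] by (simp add: p_def q_def)
        qed
        ultimately show ?thesis by simp
      qed
      finally show ?thesis .
    qed
    also have "(\<Sum>h'\<in>R - {h}. g h * g h' * (p - q)) = g h * (p - q) * (\<Sum>h'\<in>R - {h}. g h')"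
      by (simp add: sum_distrib_left mult_ac)
    also have "(\<Sum>h'\<in>R - {h}. g h') = - g h"
      using sum.remove[OF R h, of g] g0 by simp
    finally show "(\<Sum>h'\<in>R. g h * g h' * real (card {F \<in> Ss R l. h \<in> F \<and> h' \<in> F})) = q * (g h)^2"
      by (simp add: power2_eq_square algebra_simps)
  qed
  finally show ?thesis by (simp add: q_def sum_distrib_left)
qed

lemma sum_c:
  assumes R: "finite R"
  shows "(\<Sum>h\<in>R. card {F \<in> {F \<in> G. F \<subseteq> R \<and> card F = l}. h \<in> F}) = l * card {F \<in> G. F \<subseteq> R \<and> card F = l}"
proof -
  let ?GR = "{F \<in> G. F \<subseteq> R \<and> card F = l}"
  have fG: "finite ?GR" by (rule finite_subset[of _ "Pow R"]) (use R in auto)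
  have "(\<Sum>h\<in>R. card {F \<in> ?GR. h \<in> F}) = (\<Sum>h\<in>R. \<Sum>F\<in>?GR. (if h \<in> F then 1 else 0::nat))"
    by (simp add: sum.If_cases fG Int_def)
  also have "\<dots> = (\<Sum>F\<in>?GR. \<Sum>h\<in>R. (if h \<in> F then 1 else 0::nat))" by (rule sum.swap)
  also have "\<dots> = (\<Sum>F\<in>?GR. l)"
  proof (rule sum.cong[OF refl])
    fix F assume F: "F \<in> ?GR"
    hence "R \<inter> F = F" by auto
    thus "(\<Sum>h\<in>R. (if h \<in> F then 1 else 0::nat)) = l" using F R by (simp add: sum.If_cases)
  qed
  finally show ?thesis by simp
qed

lemma sum_L:
  fixes g :: "nat \<Rightarrow> real"
  assumes R: "finite R"
  shows "(\<Sum>F\<in>{F \<in> G. F \<subseteq> R \<and> card F = l}. \<Sum>h\<in>F. g h) = (\<Sum>h\<in>R. g h * real (card {F \<in> {F \<in> G. F \<subseteq> R \<and> card F = l}. h \<in> F}))"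
proof -
  let ?GR = "{F \<in> G. F \<subseteq> R \<and> card F = l}"
  have fG: "finite ?GR" by (rule finite_subset[of _ "Pow R"]) (use R in auto)
  have "(\<Sum>F\<in>?GR. \<Sum>h\<in>F. g h) = (\<Sum>F\<in>?GR. \<Sum>h\<in>R. (if h \<in> F then g h else 0))"
  proof (rule sum.cong[OF refl])
    fix F assume F: "F \<in> ?GR"
    hence "R \<inter> F = F" by auto
    thus "(\<Sum>h\<in>F. g h) = (\<Sum>h\<in>R. (if h \<in> F then g h else 0))" using R by (simp add: sum.If_cases)
  qed
  also have "\<dots> = (\<Sum>h\<in>R. \<Sum>F\<in>?GR. (if h \<in> F then g h else 0))" by (rule sum.swap)
  also have "\<dots> = (\<Sum>h\<in>R. g h * real (card {F \<in> ?GR. h \<in> F}))"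
    by (simp add: sum.If_cases fG Int_def mult.commute)
  finally show ?thesis .
qed

lemma var_bound:
  fixes G :: "nat set set" and l :: nat
  assumes R: "finite R" and n: "card R > 0"
  defines "GR \<equiv> {F \<in> G. F \<subseteq> R \<and> card F = l}"
  defines "g \<equiv> (\<lambda>h. real (card {F \<in> GR. h \<in> F}) - real l * real (card GR) / real (card R))"
  shows "(\<Sum>h\<in>R. (g h)^2) \<le> real (card GR) * (real ((card R - 1) choose l) - real ((card R - 2) choose l))"
proof -
  define q where "q = real ((card R - 1) choose l) - real ((card R - 2) choose l)"
  define S where "S = (\<Sum>h\<in>R. (g h)^2)"
  have q0: "q \<ge> 0" unfolding q_def using binomial_right_mono[of "card R - 2" "card R - 1" l] by simp
  have fG: "finite GR" unfolding GR_def by (rule finite_subset[of _ "Pow R"]) (use R in auto)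
  have sc: "(\<Sum>h\<in>R. real (card {F \<in> GR. h \<in> F})) = real l * real (card GR)"
  proof -
    have "(\<Sum>h\<in>R. real (card {F \<in> GR. h \<in> F})) = real (\<Sum>h\<in>R. card {F \<in> GR. h \<in> F})"
      by (simp only: of_nat_sum)
    also have "\<dots> = real (l * card GR)" unfolding GR_def using sum_c[OF R, of G l] by (simp only:)
    finally show ?thesis by (simp only: of_nat_mult)
  qed
  have g0: "(\<Sum>h\<in>R. g h) = 0"
    using n by (simp add: g_def sum_subtractf sc)
  have gc: "(\<Sum>h\<in>R. g h * real (card {F \<in> GR. h \<in> F})) = S"
  proof -
    have "(\<Sum>h\<in>R. g h * real (card {F \<in> GR. h \<in> F})) = (\<Sum>h\<in>R. g h * (g h + real l * real (card GR) / real (card R)))"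
      by (simp add: g_def)
    also have "\<dots> = S + (\<Sum>h\<in>R. g h) * (real l * real (card GR) / real (card R))"
      by (simp add: S_def distrib_left power2_eq_square sum.distrib sum_distrib_right sum_divide_distrib)
    finally show ?thesis using g0 by simp
  qed
  have "S^2 = (\<Sum>F\<in>GR. \<Sum>h\<in>F. g h)^2"
  proof -
    have e: "(\<Sum>F\<in>GR. \<Sum>h\<in>F. g h) = (\<Sum>h\<in>R. g h * real (card {F \<in> GR. h \<in> F}))"
      unfolding GR_def by (rule sum_L[OF R])
    show ?thesis by (simp only: e gc)
  qed
  also have "\<dots> \<le> (\<Sum>F\<in>GR. (\<Sum>h\<in>F. g h)^2) * real (card GR)"
    by (rule sum_squared_le_sum_of_squares)
  also have "\<dots> \<le> (\<Sum>F\<in>Ss R l. (\<Sum>h\<in>F. g h)^2) * real (card GR)"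
  proof (rule mult_right_mono)
    show "(\<Sum>F\<in>GR. (\<Sum>h\<in>F. g h)^2) \<le> (\<Sum>F\<in>Ss R l. (\<Sum>h\<in>F. g h)^2)"
      by (rule sum_mono2[OF Ss_finite[OF R]]) (auto simp: GR_def Ss_def)
  qed simp
  also have "\<dots> = q * S * real (card GR)"
    using quad_sum[OF R g0, of l] by (simp add: q_def S_def)
  finally have *: "S^2 \<le> S * (q * real (card GR))" by (simp add: mult_ac)
  have S0: "S \<ge> 0" unfolding S_def by (simp add: sum_nonneg)
  show ?thesis
  proof (cases "S = 0")
    case True thus ?thesis using q0 by (simp add: S_def q_def)
  next
    case False
    hence "S > 0" using S0 by simp
    with * have "S \<le> q * real (card GR)" by (simp add: power2_eq_square)
    thus ?thesis by (simp add: S_def q_def mult.commute)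
  qed
qed

lemma exp_le_quad:
  fixes x :: real assumes "x \<le> 1" shows "exp x \<le> 1 + x + x^2"
proof (cases "x \<ge> 0")
  case True thus ?thesis using exp_bound[OF True assms] by simp
next
  case False
  hence x: "x < 0" by simp
  have e: "exp x * exp (-x) = 1" by (simp add: exp_minus)
  have "1 - x \<le> exp (-x)" using exp_ge_add_one_self[of "-x"] by simp
  hence "exp x * (1 - x) \<le> 1" using e by (metis mult_left_mono exp_ge_zero)
  moreover have "1 \<le> (1 - x) * (1 + x + x^2)"
  proof -
    have "(1 - x) * (1 + x + x^2) = 1 - x^3" by (simp add: algebra_simps power2_eq_square power3_eq_cube)
    moreover have "x^3 \<le> 0" using x unfolding power3_eq_cube by (metis mult_nonneg_nonpos zero_le_square less_imp_le)
    ultimately show ?thesis by simp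
  qed
  ultimately have "exp x * (1 - x) \<le> (1 + x + x^2) * (1 - x)" by (simp add: mult.commute)
  thus ?thesis using x by (simp add: mult_le_cancel_right)
qed

definition dens :: "nat set set \<Rightarrow> nat \<Rightarrow> nat set \<Rightarrow> real" where
  "dens G l R = real (card {F \<in> G. F \<subseteq> R \<and> card F = l}) / real (card R choose l)"

lemma one_step:
  fixes G :: "nat set set" and l :: nat and lam :: real
  assumes R: "finite R" and nl: "card R \<ge> l + 2" and l: "l > 0"
    and lam0: "lam \<ge> 0" and laml: "lam * real l \<le> real (card R) - real l"
  shows "(\<Sum>h\<in>R. exp (- lam * dens G l (R - {h})))
     \<le> real (card R) * exp (- lam * dens G l R + lam^2 * real l / ((real (card R) - real l) * (real (card R) - real l - 1)))"
proof -
  define n where "n = card R"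
  define GR where "GR = {F \<in> G. F \<subseteq> R \<and> card F = l}"
  define N where "N = card GR"
  define B where "B = n choose l"
  define b1 where "b1 = (n - 1) choose l"
  define b2 where "b2 = (n - 2) choose l"
  define c where "c = (\<lambda>h. card {F \<in> GR. h \<in> F})"
  define g where "g = (\<lambda>h. real (c h) - real l * real N / real n)"
  define v where "v = real l / ((real n - real l) * (real n - real l - 1))"
  define x where "x = (\<lambda>h. lam * real n * g h / ((real n - real l) * real B))"
  have n2: "n \<ge> l + 2" using nl n_def by simp
  have fG: "finite GR" unfolding GR_def by (rule finite_subset[of _ "Pow R"]) (use R in auto)
  have id1: "real (n - l) * real B = real n * real b1"
    unfolding B_def b1_def by (metis binomial_absorb_comp of_nat_mult)
  hence id1': "(real n - real l) * real B = real n * real b1" using n2 by (simp add: of_nat_diff)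
  have id2: "real (n - 1 - l) * real b1 = real (n - 1) * real b2"
    unfolding b2_def b1_def using binomial_absorb_comp[of "n - 1" l] by (metis diff_diff_left one_add_one of_nat_mult)
  hence id2': "(real n - 1 - real l) * real b1 = (real n - 1) * real b2" using n2 by (simp add: of_nat_diff algebra_simps)
  have Bpos: "real B > 0" unfolding B_def using n2 by simp
  have b1pos: "real b1 > 0" unfolding b1_def using n2 by simp
  have npos: "real n > 0" using n2 by simp
  have nlpos: "real n - real l > 1" using n2 by simp
  have NB: "N \<le> B" unfolding N_def B_def n_def using Ss_card[OF R, of l]
    by (metis (no_types, lifting) GR_def Ss_def Ss_finite assms(1) card_mono mem_Collect_eq subsetI)
  have cR: "card (R - {h}) = n - 1" if "h \<in> R" for h using that R n_def by (simp add: card_Diff_singleton)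
  have dh: "dens G l (R - {h}) = (real N - real (c h)) / real b1" if h: "h \<in> R" for h
  proof -
    have "GR = {F \<in> G. F \<subseteq> R - {h} \<and> card F = l} \<union> {F \<in> GR. h \<in> F}" unfolding GR_def by auto
    moreover have "finite {F \<in> G. F \<subseteq> R - {h} \<and> card F = l}"
      by (rule finite_subset[OF _ fG]) (auto simp: GR_def)
    moreover have "finite {F \<in> GR. h \<in> F}" using fG by simp
    moreover have "{F \<in> G. F \<subseteq> R - {h} \<and> card F = l} \<inter> {F \<in> GR. h \<in> F} = {}" by auto
    ultimately have "N = card {F \<in> G. F \<subseteq> R - {h} \<and> card F = l} + c h"
      unfolding N_def c_def by (metis card_Un_disjoint)
    thus ?thesis unfolding dens_def using cR[OF h] b1_def by simp
  qed
  have d0: "dens G l R = real N / real B" unfolding dens_def N_def GR_def B_def n_def by simp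
  have Dh: "- lam * dens G l (R - {h}) = - lam * dens G l R + x h" if h: "h \<in> R" for h
  proof -
    have b1e: "real b1 = (real n - real l) * real B / real n" using id1' npos by (simp add: field_simps)
    show ?thesis unfolding dh[OF h] d0 x_def g_def b1e using npos nlpos Bpos
      by (simp add: field_simps)
  qed
  have ch: "real n * real (c h) \<le> real l * real B" if h: "h \<in> R" for h
  proof -
    have "c h \<le> card {F \<in> Ss R l. h \<in> F}" unfolding c_def
      by (rule card_mono) (use R in \<open>auto simp: Ss_def GR_def intro: finite_subset[of _ "Pow R"]\<close>)
    hence "real (c h) \<le> real B - real b1"
      using card_contains_real[OF R h, of l] unfolding B_def b1_def n_def by simp
    hence "real n * real (c h) \<le> real n * (real B - real b1)" using npos by simp
    also have "\<dots> = real l * real B" using id1' by (simp add: algebra_simps)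
    finally show ?thesis .
  qed
  have x1: "x h \<le> 1" if h: "h \<in> R" for h
  proof -
    have "real n * g h = real n * real (c h) - real l * real N" unfolding g_def using npos by (simp add: field_simps)
    moreover have "real l * real N \<ge> 0" by simp
    ultimately have "real n * g h \<le> real l * real B" using ch[OF h] by linarith
    hence "lam * (real n * g h) \<le> lam * (real l * real B)" using lam0 by (rule mult_left_mono)
    also have "\<dots> \<le> (real n - real l) * real B" using laml Bpos
      by (metis mult.assoc mult_right_mono less_imp_le n_def)
    finally show ?thesis unfolding x_def using nlpos Bpos by (simp add: divide_le_eq mult.assoc)
  qed
  have sg: "(\<Sum>h\<in>R. g h) = 0"
  proof -
    have "(\<Sum>h\<in>R. real (c h)) = real l * real N"
    proof -
      have "(\<Sum>h\<in>R. real (c h)) = real (\<Sum>h\<in>R. c h)" by (simp only: of_nat_sum)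
      also have "\<dots> = real (l * N)" unfolding c_def N_def GR_def using sum_c[OF R, of G l] by (simp only:)
      finally show ?thesis by (simp only: of_nat_mult)
    qed
    thus ?thesis unfolding g_def using npos by (simp add: sum_subtractf n_def)
  qed
  have sx: "(\<Sum>h\<in>R. x h) = 0" unfolding x_def
    by (simp add: sum_divide_distrib[symmetric] sum_distrib_left[symmetric] sg)
  have vb: "(\<Sum>h\<in>R. (g h)^2) \<le> real N * (real b1 - real b2)"
    using var_bound[OF R, of G l] n2 unfolding g_def c_def N_def GR_def b1_def b2_def n_def by simp
  have qid: "real n * (real n - 1) * (real b1 - real b2) = real l * (real n - real l) * real B"
  proof -
    have "(real n - 1) * (real b1 - real b2) = real l * real b1" using id2' by (simp add: algebra_simps)
    hence "real n * (real n - 1) * (real b1 - real b2) = real l * (real n * real b1)" by (simp add: mult_ac)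
    also have "\<dots> = real l * ((real n - real l) * real B)" using id1' by simp
    finally show ?thesis by (simp add: mult_ac)
  qed
  have sx2: "(\<Sum>h\<in>R. (x h)^2) \<le> real n * (lam^2 * v)"
  proof -
    have "(\<Sum>h\<in>R. (x h)^2) = (lam * real n / ((real n - real l) * real B))^2 * (\<Sum>h\<in>R. (g h)^2)"
    proof -
      have xe: "x h = (lam * real n / ((real n - real l) * real B)) * g h" for h unfolding x_def by simp
      show ?thesis by (simp only: xe power_mult_distrib sum_distrib_left)
    qed
    also have "\<dots> \<le> (lam * real n / ((real n - real l) * real B))^2 * (real B * (real b1 - real b2))"
    proof (rule mult_left_mono)
      have "real b1 - real b2 \<ge> 0" using qid npos nlpos Bpos n2
        by (smt (verit, ccfv_SIG) mult_pos_pos of_nat_0_le_iff zero_le_mult_iff)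
      thus "(\<Sum>h\<in>R. (g h)^2) \<le> real B * (real b1 - real b2)"
        using vb NB by (meson dual_order.trans mult_right_mono of_nat_le_iff)
    qed simp
    also have "\<dots> = lam^2 * real n * real l / ((real n - real l) * (real n - 1))"
    proof -
      have ne: "real n \<noteq> 0" "real n - 1 \<noteq> 0" "real n - real l \<noteq> 0" "real B \<noteq> 0"
        using npos nlpos Bpos n2 by auto
      have "real b2 = real b1 - real l * (real n - real l) * real B / (real n * (real n - 1))"
        using qid ne by (simp add: field_simps)
      hence "real b1 - real b2 = real l * (real n - real l) * real B / (real n * (real n - 1))" by simp
      hence "(lam * real n / ((real n - real l) * real B))^2 * (real B * (real b1 - real b2))
         = (lam * real n / ((real n - real l) * real B))^2 * (real B * (real l * (real n - real l) * real B / (real n * (real n - 1))))"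
        by simp
      also have "\<dots> = lam^2 * real n * real l / ((real n - real l) * (real n - 1))"
      proof -
        have gen: "(lam * nn / (d * BB))^2 * (BB * (ll * d * BB / (nn * e))) = lam^2 * nn * ll / (d * e)"
          if "nn \<noteq> 0" "d \<noteq> 0" "e \<noteq> 0" "BB \<noteq> 0" for nn d e BB ll :: real
          using that by (simp add: field_simps power2_eq_square)
        show ?thesis by (rule gen) (use ne in auto)
      qed
      finally show ?thesis .
    qed
    also have "\<dots> \<le> real n * (lam^2 * v)"
    proof -
      have "(real n - real l) * (real n - real l - 1) \<le> (real n - real l) * (real n - 1)"
        using nlpos by (intro mult_left_mono) auto
      moreover have "(real n - real l) * (real n - real l - 1) > 0" using nlpos by simp
      ultimately have "1 / ((real n - real l) * (real n - 1)) \<le> 1 / ((real n - real l) * (real n - real l - 1))"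
        by (intro divide_left_mono) auto
      hence "lam^2 * real n * real l * (1 / ((real n - real l) * (real n - 1))) \<le> lam^2 * real n * real l * (1 / ((real n - real l) * (real n - real l - 1)))"
        using npos by (intro mult_left_mono) auto
      thus ?thesis unfolding v_def by (simp add: algebra_simps)
    qed
    finally show ?thesis .
  qed
  have "(\<Sum>h\<in>R. exp (- lam * dens G l (R - {h}))) = (\<Sum>h\<in>R. exp (- lam * dens G l R) * exp (x h))"
    by (intro sum.cong refl) (simp only: Dh exp_add)
  also have "\<dots> = exp (- lam * dens G l R) * (\<Sum>h\<in>R. exp (x h))" by (simp add: sum_distrib_left)
  also have "\<dots> \<le> exp (- lam * dens G l R) * (real n * exp (lam^2 * v))"
  proof (rule mult_left_mono)
    have "(\<Sum>h\<in>R. exp (x h)) \<le> (\<Sum>h\<in>R. 1 + x h + (x h)^2)"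
      by (intro sum_mono exp_le_quad x1)
    also have "\<dots> = real n + (\<Sum>h\<in>R. (x h)^2)" using sx by (simp add: sum.distrib n_def)
    also have "\<dots> \<le> real n * (1 + lam^2 * v)" using sx2 by (simp add: algebra_simps)
    also have "\<dots> \<le> real n * exp (lam^2 * v)" using npos exp_ge_add_one_self[of "lam^2 * v"] by simp
    finally show "(\<Sum>h\<in>R. exp (x h)) \<le> real n * exp (lam^2 * v)" .
  qed simp
  also have "exp (- lam * dens G l R) * (real n * exp (lam^2 * v)) = real n * exp (- lam * dens G l R + lam^2 * v)"
    by (simp only: exp_add mult_ac)
  finally show ?thesis unfolding v_def n_def by (simp only: times_divide_eq_right)
qed

lemma dc:
  fixes f :: "nat set \<Rightarrow> real"
  assumes R: "finite R"
  shows "real (Suc k) * (\<Sum>K\<in>Ss R (Suc k). f K) = (\<Sum>h\<in>R. \<Sum>K\<in>Ss (R - {h}) k. f (insert h K))"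
proof -
  have fS: "finite (Ss R (Suc k))" using Ss_finite[OF R] .
  have "real (Suc k) * (\<Sum>K\<in>Ss R (Suc k). f K) = (\<Sum>K\<in>Ss R (Suc k). \<Sum>h\<in>R. if h \<in> K then f K else 0)"
  proof -
    have "(\<Sum>h\<in>R. if h \<in> K then f K else 0) = real (Suc k) * f K" if K: "K \<in> Ss R (Suc k)" for K
    proof -
      have "R \<inter> K = K" "card K = Suc k" using K by (auto simp: Ss_def)
      thus ?thesis using R by (simp add: sum.If_cases)
    qed
    thus ?thesis by (simp add: sum_distrib_left)
  qed
  also have "\<dots> = (\<Sum>h\<in>R. \<Sum>K\<in>Ss R (Suc k). if h \<in> K then f K else 0)" by (rule sum.swap)
  also have "\<dots> = (\<Sum>h\<in>R. \<Sum>K\<in>Ss (R - {h}) k. f (insert h K))"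
  proof (rule sum.cong[OF refl])
    fix h assume h: "h \<in> R"
    have eq: "{K \<in> Ss R (Suc k). h \<in> K} = insert h ` Ss (R - {h}) k"
    proof
      show "{K \<in> Ss R (Suc k). h \<in> K} \<subseteq> insert h ` Ss (R - {h}) k"
      proof
        fix K assume K: "K \<in> {K \<in> Ss R (Suc k). h \<in> K}"
        hence "K = insert h (K - {h})" by auto
        moreover have "K - {h} \<in> Ss (R - {h}) k" using K R
          by (auto simp: Ss_def card_Diff_singleton intro: finite_subset)
        ultimately show "K \<in> insert h ` Ss (R - {h}) k" by blast
      qed
      show "insert h ` Ss (R - {h}) k \<subseteq> {K \<in> Ss R (Suc k). h \<in> K}"
      proof
        fix K assume "K \<in> insert h ` Ss (R - {h}) k"
        then obtain K' where K': "K' \<in> Ss (R - {h}) k" "K = insert h K'" by blast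
        have "finite K'" using K' R by (auto simp: Ss_def intro: finite_subset)
        moreover have "h \<notin> K'" using K' by (auto simp: Ss_def)
        ultimately show "K \<in> {K \<in> Ss R (Suc k). h \<in> K}" using K' h by (auto simp: Ss_def)
      qed
    qed
    have inj: "inj_on (insert h) (Ss (R - {h}) k)"
    proof (rule inj_onI)
      fix A B assume AB: "A \<in> Ss (R - {h}) k" "B \<in> Ss (R - {h}) k" "insert h A = insert h B"
      hence "h \<notin> A" "h \<notin> B" by (auto simp: Ss_def)
      thus "A = B" using AB(3) by (metis Diff_insert_absorb)
    qed
    have "(\<Sum>K\<in>Ss R (Suc k). if h \<in> K then f K else 0) = (\<Sum>K\<in>{K \<in> Ss R (Suc k). h \<in> K}. f K)"
      using fS by (simp add: sum.If_cases Int_def)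
    also have "\<dots> = (\<Sum>K\<in>Ss (R - {h}) k. f (insert h K))"
      unfolding eq by (rule sum.reindex[OF inj, unfolded comp_def])
    finally show "(\<Sum>K\<in>Ss R (Suc k). if h \<in> K then f K else 0) = (\<Sum>K\<in>Ss (R - {h}) k. f (insert h K))" .
  qed
  finally show ?thesis .
qed

lemma mgf_ind:
  fixes G :: "nat set set" and l :: nat and lam :: real
  assumes l: "l > 0" and lam0: "lam \<ge> 0"
  shows "finite R \<Longrightarrow> card R \<ge> k + l + 1 \<Longrightarrow> lam * real l \<le> real (card R) - real k - real l \<Longrightarrow>
    (\<Sum>K\<in>Ss R k. exp (- lam * dens G l (R - K)))
      \<le> real (card R choose k) * exp (- lam * dens G l R
           + lam^2 * (real l / (real (card R) - real k - real l) - real l / (real (card R) - real l)))"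
proof (induction k arbitrary: R)
  case 0
  have "Ss R 0 = {{}}" using 0 by (auto simp: Ss_def) (metis 0(1) card_0_eq empty_iff finite_subset)
  thus ?case by simp
next
  case (Suc k)
  define n where "n = card R"
  define Q1 where "Q1 = real l / (real (n - 1) - real k - real l) - real l / (real (n - 1) - real l)"
  define v where "v = real l / ((real n - real l) * (real n - real l - 1))"
  have n: "n \<ge> Suc k + l + 1" using Suc.prems n_def by simp
  have cRh: "card (R - {h}) = n - 1" if "h \<in> R" for h using that Suc.prems n_def by (simp add: card_Diff_singleton)
  have rn1: "real (n - 1) = real n - 1" using n by (simp add: of_nat_diff)
  have IH: "(\<Sum>K\<in>Ss (R - {h}) k. exp (- lam * dens G l ((R - {h}) - K)))
      \<le> real ((n - 1) choose k) * exp (- lam * dens G l (R - {h}) + lam^2 * Q1)" if h: "h \<in> R" for h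
    using Suc.IH[of "R - {h}"] Suc.prems cRh[OF h] n rn1 unfolding Q1_def n_def by simp
  have "real (Suc k) * (\<Sum>K\<in>Ss R (Suc k). exp (- lam * dens G l (R - K)))
      = (\<Sum>h\<in>R. \<Sum>K\<in>Ss (R - {h}) k. exp (- lam * dens G l (R - insert h K)))"
    by (rule dc[OF Suc.prems(1)])
  also have "\<dots> = (\<Sum>h\<in>R. \<Sum>K\<in>Ss (R - {h}) k. exp (- lam * dens G l ((R - {h}) - K)))"
  proof -
    have e: "R - insert h K = (R - {h}) - K" for h K by blast
    show ?thesis by (intro sum.cong refl) (subst e, rule refl)
  qed
  also have "\<dots> \<le> (\<Sum>h\<in>R. real ((n - 1) choose k) * exp (- lam * dens G l (R - {h}) + lam^2 * Q1))"
    by (rule sum_mono) (rule IH)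
  also have "\<dots> = real ((n - 1) choose k) * exp (lam^2 * Q1) * (\<Sum>h\<in>R. exp (- lam * dens G l (R - {h})))"
    by (simp only: sum_distrib_left exp_add mult_ac)
  also have "\<dots> \<le> real ((n - 1) choose k) * exp (lam^2 * Q1) * (real n * exp (- lam * dens G l R + lam^2 * v))"
  proof (rule mult_left_mono)
    show "(\<Sum>h\<in>R. exp (- lam * dens G l (R - {h}))) \<le> real n * exp (- lam * dens G l R + lam^2 * v)"
      unfolding v_def n_def times_divide_eq_right
      by (rule one_step[OF Suc.prems(1) _ l lam0]) (use Suc.prems n n_def in auto)
  qed simp
  also have "\<dots> = real (Suc k) * (real (n choose Suc k) * exp (- lam * dens G l R + lam^2 * (Q1 + v)))"
  proof -
    have "Suc k * (n choose Suc k) = n * ((n - 1) choose k)" by (rule binomial_absorption)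
    hence e1: "real (Suc k) * real (n choose Suc k) = real n * real ((n - 1) choose k)"
      by (metis of_nat_mult)
    have e2: "exp (- lam * dens G l R + lam^2 * (Q1 + v)) = exp (lam^2 * Q1) * exp (- lam * dens G l R + lam^2 * v)"
      by (simp add: exp_add[symmetric] algebra_simps)
    have "real (Suc k) * (real (n choose Suc k) * exp (- lam * dens G l R + lam^2 * (Q1 + v)))
       = (real (Suc k) * real (n choose Suc k)) * (exp (lam^2 * Q1) * exp (- lam * dens G l R + lam^2 * v))"
      by (simp only: e2 mult.assoc)
    also have "\<dots> = real ((n - 1) choose k) * exp (lam^2 * Q1) * (real n * exp (- lam * dens G l R + lam^2 * v))"
      by (simp only: e1 mult_ac)
    finally show ?thesis by (rule sym)
  qed
  finally have *: "(\<Sum>K\<in>Ss R (Suc k). exp (- lam * dens G l (R - K)))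
      \<le> real (n choose Suc k) * exp (- lam * dens G l R + lam^2 * (Q1 + v))"
    by (simp only: mult_le_cancel_left_pos of_nat_0_less_iff zero_less_Suc)
  have "Q1 + v = real l / (real n - real (Suc k) - real l) - real l / (real n - real l)"
  proof -
    have a: "real n - real l - 1 > 0" "real n - real l > 0" "real n - real (Suc k) - real l > 0" using n by auto
    have "v = real l / (real n - real l - 1) - real l / (real n - real l)"
      unfolding v_def using a by (simp add: field_simps)
    thus ?thesis unfolding Q1_def rn1 by (simp add: algebra_simps)
  qed
  with * show ?case unfolding n_def by simp
qed


lemma ln2_gt: "ln (2::real) > 1/2"
proof -
  have "exp (1/2::real) \<le> 1 + 1/2 + (1/2)^2" by (rule exp_bound) auto
  hence "exp (1/2::real) < 2" by (simp add: power2_eq_square)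
  hence "ln (exp (1/2::real)) < ln 2" by (subst ln_less_cancel_iff) auto
  thus ?thesis by simp
qed

theorem mainTheorem6:
  fixes m l l' t :: nat and a :: real and G :: "nat set set"
  assumes "m > 0" "l > 0" "l' > 0" "t > 0"
    and "m \<ge> t * l + l'"
    and "a > 0"
    and "G \<subseteq> ksubsets m l"
  shows "let \<epsilon> = (2 * a + sqrt (8 * ln 2)) / sqrt (real t);
             \<alpha> = real (card G) / real (m choose l)
         in unif_prob (ksubsets m l')
              (\<lambda>H. real (card (avoiding G H)) < (\<alpha> - \<epsilon>) * real ((m - l') choose l))
            < 2 * exp (- (a^2) / 2)"
proof -
  note l = assms(2) and tl = assms(5) and a0 = assms(6) and GK = assms(7)
  define eps where "eps = (2 * a + sqrt (8 * ln 2)) / sqrt (real t)"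
  define al where "al = real (card G) / real (m choose l)"
  define R0 where "R0 = {1..m}"
  define \<Omega> where "\<Omega> = ksubsets m l'"
  define P where "P = (\<lambda>H. real (card (avoiding G H)) < (al - eps) * real ((m - l') choose l))"
  have fR0: "finite R0" and cR0: "card R0 = m" unfolding R0_def by auto
  have Om: "\<Omega> = Ss R0 l'" unfolding \<Omega>_def ksubsets_def Ss_def R0_def by simp
  have fOm: "finite \<Omega>" using Om Ss_finite[OF fR0] by simp
  have cOm: "card \<Omega> = m choose l'" using Om Ss_card[OF fR0] cR0 by simp
  have lm: "l' \<le> m" using tl by linarith
  have cOm0: "card \<Omega> > 0" using cOm lm by simp
  have Omne: "\<Omega> \<noteq> {}" using cOm0 by auto
  have prob: "unif_prob \<Omega> P = real (card {H \<in> \<Omega>. P H}) / real (card \<Omega>)"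
    unfolding unif_prob_def using measure_pmf_of_set[OF Omne fOm, of "{H. P H}"]
    by (simp add: Int_def)
  have GR0: "{F \<in> G. F \<subseteq> R0 \<and> card F = l} = G" using GK unfolding ksubsets_def R0_def by auto
  have dal: "dens G l R0 = al" unfolding dens_def GR0 cR0 al_def ..
  have alle1: "al \<le> 1"
  proof -
    have "card G \<le> card (Ss R0 l)" using GK Ss_finite[OF fR0]
      by (intro card_mono) (auto simp: ksubsets_def Ss_def R0_def)
    hence "card G \<le> m choose l" using Ss_card[OF fR0] cR0 by simp
    moreover have "m choose l > 0"
    proof -
      have "l \<le> t * l" using assms(4) by simp
      hence "l \<le> m" using tl by linarith
      thus ?thesis by simp
    qed
    ultimately show ?thesis unfolding al_def by (simp add: divide_le_eq_1)
  qed
  have PH: "P H \<longleftrightarrow> dens G l (R0 - H) < al - eps" if H: "H \<in> \<Omega>" for H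
  proof -
    have HR: "H \<subseteq> R0" "card H = l'" using H Om by (auto simp: Ss_def)
    have cRH: "card (R0 - H) = m - l'" using HR fR0 cR0 by (simp add: card_Diff_subset finite_subset)
    have av: "avoiding G H = {F \<in> G. F \<subseteq> R0 - H \<and> card F = l}"
      unfolding avoiding_def using GK unfolding ksubsets_def R0_def by auto
    have bp: "real ((m - l') choose l) > 0" using tl l
    proof -
      have "l \<le> t * l" using assms(4) by simp
      hence "l \<le> m - l'" using tl by linarith
      thus ?thesis by simp
    qed
    show ?thesis unfolding P_def dens_def av cRH using bp by (simp add: divide_less_eq)
  qed
  show ?thesis
  proof (cases "al - eps > 0")
    case False
    have E0: "{H \<in> \<Omega>. P H} = {}"
    proof -
      have "\<not> P H" for H
      proof -
        have "(al - eps) * real ((m - l') choose l) \<le> 0" using False by (simp add: mult_nonpos_nonneg)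
        thus ?thesis unfolding P_def by simp
      qed
      thus ?thesis by auto
    qed
    have "unif_prob \<Omega> P = 0" unfolding prob E0 by simp
    thus ?thesis unfolding Let_def eps_def[symmetric] al_def[symmetric] P_def[symmetric] \<Omega>_def[symmetric] by simp
  next
    case True
    hence eps1: "eps < 1" using alle1 by simp
    have st: "sqrt (real t) > 0" using assms(4) by simp
    have c0: "sqrt (8 * ln 2) \<ge> 0" by simp
    have h1: "2 * a + sqrt (8 * ln 2) < sqrt (real t)" using eps1 st unfolding eps_def by (simp add: divide_less_eq)
    have t4: "real t > 4"
    proof -
      have "sqrt (8 * ln 2) < sqrt (real t)" using h1 a0 by linarith
      hence "8 * ln 2 < real t" by (simp only: real_sqrt_less_iff)
      thus ?thesis using ln2_gt by simp
    qed
    have at: "2 * a < sqrt (real t)" using h1 c0 by linarith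
    define lam where "lam = a * sqrt (real t)"
    have lam0: "lam \<ge> 0" unfolding lam_def using a0 by simp
    have lamt: "lam \<le> real t - 1"
    proof -
      have "2 * lam < sqrt (real t) * sqrt (real t)" unfolding lam_def using at st
        using mult_strict_right_mono[OF at st] by (simp add: mult_ac)
      thus ?thesis using t4 by simp
    qed
    have mll: "real m - real l' - real l \<ge> (real t - 1) * real l"
    proof -
      have "real (t * l + l') \<le> real m" using tl by (simp only: of_nat_le_iff)
      thus ?thesis by (simp add: algebra_simps)
    qed
    have tl1: "(real t - 1) * real l > 0" using t4 l by simp
    have laml: "lam * real l \<le> real (card R0) - real l' - real l"
      using mult_right_mono[OF lamt, of "real l"] mll cR0 by simp
    have mk: "card R0 \<ge> l' + l + 1"
    proof -
      have "real m - real l' - real l > 0" using mll tl1 by linarith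
      thus ?thesis using cR0 by simp
    qed
    define Q where "Q = real l / (real (card R0) - real l' - real l) - real l / (real (card R0) - real l)"
    have Qb: "Q \<le> 1 / (real t - 1)"
    proof -
      have p1: "real m - real l' - real l > 0" using mll tl1 by linarith
      have "real l / (real m - real l) \<ge> 0" using p1 by simp
      hence "Q \<le> real l / (real m - real l' - real l)" unfolding Q_def cR0 by simp
      also have "\<dots> \<le> real l / ((real t - 1) * real l)"
        using mll tl1 l by (intro divide_left_mono) auto
      also have "\<dots> = 1 / (real t - 1)" using l by simp
      finally show ?thesis .
    qed
    have mgf: "(\<Sum>H\<in>\<Omega>. exp (- lam * dens G l (R0 - H))) \<le> real (card \<Omega>) * exp (- lam * al + lam^2 * Q)"
      using mgf_ind[OF l lam0 fR0 mk laml, of G] unfolding Om[symmetric] Q_def dal cOm cR0 by simp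
    define E where "E = {H \<in> \<Omega>. P H}"
    have "real (card E) * exp (- lam * (al - eps)) = (\<Sum>H\<in>E. exp (- lam * (al - eps)))" by simp
    also have "\<dots> \<le> (\<Sum>H\<in>E. exp (- lam * dens G l (R0 - H)))"
    proof (rule sum_mono)
      fix H assume "H \<in> E"
      hence "dens G l (R0 - H) < al - eps" using PH unfolding E_def by auto
      hence "- lam * (al - eps) \<le> - lam * dens G l (R0 - H)" using lam0 by (simp add: mult_left_mono)
      thus "exp (- lam * (al - eps)) \<le> exp (- lam * dens G l (R0 - H))" by simp
    qed
    also have "\<dots> \<le> (\<Sum>H\<in>\<Omega>. exp (- lam * dens G l (R0 - H)))"
      by (rule sum_mono2[OF fOm]) (auto simp: E_def)
    also have "\<dots> \<le> real (card \<Omega>) * exp (- lam * al + lam^2 * Q)" by (rule mgf)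
    finally have "real (card E) / real (card \<Omega>) \<le> exp (- lam * al + lam^2 * Q) / exp (- lam * (al - eps))"
      using cOm0 by (simp add: field_simps)
    also have "\<dots> = exp (- lam * eps + lam^2 * Q)" by (simp add: exp_diff[symmetric] algebra_simps)
    also have "\<dots> \<le> exp (- (a^2) / 2)"
    proof -
      have le: "lam * eps = a * (2 * a + sqrt (8 * ln 2))" unfolding lam_def eps_def using st by simp
      have "lam * eps \<ge> 2 * a^2" unfolding le using a0 c0 by (simp add: power2_eq_square algebra_simps)
      moreover have "lam^2 * Q \<le> a^2 * (real t / (real t - 1))"
      proof -
        have "lam^2 * Q \<le> lam^2 * (1 / (real t - 1))" by (rule mult_left_mono[OF Qb]) simp
        also have "lam^2 * (1 / (real t - 1)) = a^2 * (real t / (real t - 1))" unfolding lam_def by (simp add: power_mult_distrib)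
        finally show ?thesis .
      qed
      moreover have "real t / (real t - 1) \<le> 3/2" using t4 by (simp add: divide_le_eq)
      hence "a^2 * (real t / (real t - 1)) \<le> a^2 * (3/2)" by (rule mult_left_mono) simp
      ultimately have "- lam * eps + lam^2 * Q \<le> - (a^2) / 2" by linarith
      thus ?thesis by simp
    qed
    also have "\<dots> < 2 * exp (- (a^2) / 2)" by simp
    finally have "unif_prob \<Omega> P < 2 * exp (- (a^2) / 2)" using prob unfolding E_def by simp
    thus ?thesis unfolding Let_def eps_def[symmetric] al_def[symmetric] P_def[symmetric] \<Omega>_def[symmetric] by simp
  qed
qed


end
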